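(* Let $W$ be an outcome satisfying UPRF. Then $W$ satisfies $\frac{3+\sqrt{17}}{2}$-proportional fairness, satisfies $3$-individual fairness (when $N\subseteq C$), and is in the $\left(\gamma,\frac{3\gamma}{\gamma-1}\right)$-transferable core for every $\gamma>1$.
   Context: Let $(\mathcal X,d)$ be a metric space, $N=[n]$ a set of agents and $C$ a set of candidates located in $\mathcal X$, $k\in\mathbb N^+$; an outcome is $W\subseteq C$ with $|W|\le k$; $B(i,r)=\{x\in\mathcal X:d(i,x)\le r\}$; $d(i,W)=\min_{c\in W}d(i,c)$. UPRF: there are no $\ell\in\mathbb N$, no $N'\subseteq N$ with $|N'|\ge\ell n/k$, and no $y\in\mathbb R$ with $\max_{i,i'\in N'}d(i,i')\le y$ and $|\bigcup_{i\in N'}B(i,y)\cap W|<\ell$. $\alpha$-proportional fairness: there is no $N'\subseteq N$ with $|N'|\ge n/k$ and $c\in C\setminus W$ with $\alpha\,d(i,c)<d(i,W)$ for all $i\in N'$. $\beta$-individual fairness (defined only for instances with $N\subseteq C$): $d(i,W)\le\beta\,r(i)$ for all $i\in N$, where $r(i)=\min\{r: |B(i,r)\cap N|\ge n/k\}$. $(\gamma,\alpha)$-transferable core: there is no $N'\subseteq N$ and $c\in C\setminus W$ with $|N'|\ge\gamma n/k$ and $\alpha\sum_{i\in N'}d(i,c)<\sum_{i\in N'}d(i,W)$. *)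

theory Defs
  imports "HOL-Analysis.Analysis"
begin

text \<open>Candidates C :: 'a set, outcome W \<subseteq> C.
  d(i,W) = min over W of the distance, rendered by the library's infdist
  (which equals the minimum for finite nonempty W).\<close>

definition agents :: "nat \<Rightarrow> nat set" where
  "agents n = {..<n}"

definition UPRF :: "nat \<Rightarrow> nat \<Rightarrow> (nat \<Rightarrow> 'a::metric_space) \<Rightarrow> 'a set \<Rightarrow> bool" where
  "UPRF n k loc W \<longleftrightarrow>
     \<not> (\<exists>(l::nat) N' (y::real). N' \<subseteq> agents n \<and>
          real (card N') \<ge> real l * real n / real k \<and>
          (\<forall>i\<in>N'. \<forall>i'\<in>N'. dist (loc i) (loc i') \<le> y) \<and>
          card ((\<Union>i\<in>N'. cball (loc i) y) \<inter> W) < l)"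

definition prop_fair :: "nat \<Rightarrow> nat \<Rightarrow> (nat \<Rightarrow> 'a::metric_space) \<Rightarrow> 'a set \<Rightarrow> real \<Rightarrow> 'a set \<Rightarrow> bool" where
  "prop_fair n k loc C \<alpha> W \<longleftrightarrow>
     \<not> (\<exists>N' c. N' \<subseteq> agents n \<and> c \<in> C - W \<and>
          real (card N') \<ge> real n / real k \<and>
          (\<forall>i\<in>N'. \<alpha> * dist (loc i) c < infdist (loc i) W))"

definition ind_radius :: "nat \<Rightarrow> nat \<Rightarrow> (nat \<Rightarrow> 'a::metric_space) \<Rightarrow> nat \<Rightarrow> real" where
  "ind_radius n k loc i =
     Inf {r::real. real (card {j \<in> agents n. dist (loc i) (loc j) \<le> r}) \<ge> real n / real k}"

definition ind_fair :: "nat \<Rightarrow> nat \<Rightarrow> (nat \<Rightarrow> 'a::metric_space) \<Rightarrow> real \<Rightarrow> 'a set \<Rightarrow> bool" where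
  "ind_fair n k loc \<beta> W \<longleftrightarrow>
     (\<forall>i\<in>agents n. infdist (loc i) W \<le> \<beta> * ind_radius n k loc i)"

definition transferable_core :: "nat \<Rightarrow> nat \<Rightarrow> (nat \<Rightarrow> 'a::metric_space) \<Rightarrow> 'a set \<Rightarrow> real \<Rightarrow> real \<Rightarrow> 'a set \<Rightarrow> bool" where
  "transferable_core n k loc C \<gamma> \<alpha> W \<longleftrightarrow>
     \<not> (\<exists>N' c. N' \<subseteq> agents n \<and> c \<in> C - W \<and>
          real (card N') \<ge> \<gamma> * real n / real k \<and>
          \<alpha> * (\<Sum>i\<in>N'. dist (loc i) c) < (\<Sum>i\<in>N'. infdist (loc i) W))"

end

theory Submission
  imports Defs
begin

lemma excess_bound:
  fixes d e :: "nat \<Rightarrow> real" and G :: "nat set" and s \<rho> :: real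
  assumes fin: "finite G" and d0: "\<And>i. i \<in> G \<Longrightarrow> d i \<ge> 0"
    and eb: "\<And>i. i \<in> G \<Longrightarrow> e i \<le> d i + \<rho>" and r0: "\<rho> \<ge> 0"
    and cnt: "\<And>t. real (card {i\<in>G. d i \<le> t \<and> 2*t < e i}) \<le> s"
  shows "(\<Sum>i\<in>G. e i - 3 * d i) \<le> s * \<rho>"
proof -
  define u where "u i = max (d i) (min (e i / 2) (\<rho>/2))" for i
  define A where "A i = {d i ..< u i}" for i
  have du: "d i \<le> u i" for i unfolding u_def by simp
  have mA: "measure lborel (A i) = u i - d i" for i
    unfolding A_def using du[of i] by simp
  have intA: "integrable lborel (indicator (A i) :: real \<Rightarrow> real)" for i
    unfolding A_def using du[of i] by (intro integrable_real_indicator) auto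
  have s0: "0 \<le> s" using cnt[of 0] by (meson of_nat_0_le_iff order_trans)
  have each: "e i - 3 * d i \<le> 2 * (u i - d i)" if "i \<in> G" for i
    using d0[OF that] eb[OF that] unfolding u_def by (auto simp: max_def min_def)
  have pw: "(\<Sum>i\<in>G. indicator (A i) t) \<le> s * indicator {0..\<rho>/2} t" for t :: real
  proof -
    have "(\<Sum>i\<in>G. indicator (A i) t :: real) = (\<Sum>i\<in>{i\<in>G. t \<in> A i}. 1)"
      using fin by (simp add: indicator_def sum.If_cases Int_def)
    also have "\<dots> = real (card {i\<in>G. t \<in> A i})" by simp
    finally have eq: "(\<Sum>i\<in>G. indicator (A i) t :: real) = real (card {i\<in>G. t \<in> A i})" .
    show ?thesis
    proof (cases "t \<in> {0..\<rho>/2}")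
      case True
      have "{i\<in>G. t \<in> A i} \<subseteq> {i\<in>G. d i \<le> t \<and> 2*t < e i}"
        unfolding A_def u_def by (auto simp: max_def min_def split: if_splits)
      hence "card {i\<in>G. t \<in> A i} \<le> card {i\<in>G. d i \<le> t \<and> 2*t < e i}"
        using fin by (intro card_mono) auto
      hence "real (card {i\<in>G. t \<in> A i}) \<le> s" using cnt[of t]
        by (meson of_nat_le_iff order_trans)
      thus ?thesis using eq True by simp
    next
      case False
      have "{i\<in>G. t \<in> A i} = {}"
      proof (rule ccontr)
        assume "{i\<in>G. t \<in> A i} \<noteq> {}"
        then obtain i where i: "i \<in> G" "t \<in> A i" by auto
        then show False using False d0[OF i(1)] r0 unfolding A_def u_def
          by (auto simp: max_def min_def split: if_splits)
      qed
      thus ?thesis using eq False by simp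
    qed
  qed
  have "(\<Sum>i\<in>G. measure lborel (A i)) = integral\<^sup>L lborel (\<lambda>t. \<Sum>i\<in>G. indicator (A i) t)"
    using intA by (simp add: integral_sum)
  also have "\<dots> \<le> integral\<^sup>L lborel (\<lambda>t. s * indicator {0..\<rho>/2} t)"
    using intA pw by (intro integral_mono) (auto intro!: integrable_real_indicator simp: emeasure_lborel_Icc_eq)
  also have "\<dots> = s * (\<rho>/2)" using r0 by simp
  finally have I: "(\<Sum>i\<in>G. u i - d i) \<le> s * (\<rho>/2)" using mA by simp
  have "(\<Sum>i\<in>G. e i - 3 * d i) \<le> (\<Sum>i\<in>G. 2 * (u i - d i))"
    using each by (intro sum_mono) auto
  also have "\<dots> = 2 * (\<Sum>i\<in>G. u i - d i)" by (simp add: sum_distrib_left)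
  finally show ?thesis using I by simp
qed

lemma uprf_one:
  assumes "UPRF n k loc W" "G \<subseteq> agents n" "real (card G) \<ge> real n / real k"
    "\<And>i i'. i \<in> G \<Longrightarrow> i' \<in> G \<Longrightarrow> dist (loc i) (loc i') \<le> y"
  shows "\<exists>i\<in>G. \<exists>w\<in>W. dist (loc i) w \<le> y"
proof -
  have "\<not> card ((\<Union>i\<in>G. cball (loc i) y) \<inter> W) < 1"
    using assms(1) unfolding UPRF_def
    apply (simp only: not_ex)
    apply (erule allE[of _ 1], erule allE[of _ G], erule allE[of _ y])
    using assms(2,3,4) by auto
  hence "(\<Union>i\<in>G. cball (loc i) y) \<inter> W \<noteq> {}" by (metis card.empty less_one)
  thus ?thesis by (auto simp: dist_commute)
qed

lemma finite_agents: "finite (agents n)" by (simp add: agents_def)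

lemma spos_lemma: "(n::nat) > 0 \<Longrightarrow> (k::nat) > 0 \<Longrightarrow> real n / real k > 0" by simp

theorem theorem6:
  fixes n k :: nat and loc :: "nat \<Rightarrow> 'a::metric_space" and C W :: "'a set"
  assumes "n > 0" and "k > 0"
    and "W \<subseteq> C" and "finite W" and "card W \<le> k"
    and "UPRF n k loc W"
  shows "prop_fair n k loc C ((3 + sqrt 17) / 2) W
    \<and> (loc ` agents n \<subseteq> C \<longrightarrow> ind_fair n k loc 3 W)
    \<and> (\<forall>\<gamma>::real. \<gamma> > 1 \<longrightarrow> transferable_core n k loc C \<gamma> (3 * \<gamma> / (\<gamma> - 1)) W)"
proof (intro conjI impI allI)
  note fa = finite_agents[of n]
  note spos = spos_lemma[OF assms(1,2)]
  show "prop_fair n k loc C ((3 + sqrt 17) / 2) W"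
    unfolding prop_fair_def
  proof
    assume "\<exists>N' c. N' \<subseteq> agents n \<and> c \<in> C - W \<and> real (card N') \<ge> real n / real k \<and>
          (\<forall>i\<in>N'. (3 + sqrt 17) / 2 * dist (loc i) c < infdist (loc i) W)"
    then obtain N' c where N': "N' \<subseteq> agents n" "real (card N') \<ge> real n / real k"
      and lt: "\<And>i. i \<in> N' \<Longrightarrow> (3 + sqrt 17) / 2 * dist (loc i) c < infdist (loc i) W" by blast
    define \<alpha> where "\<alpha> = (3 + sqrt 17) / 2"
    have fN: "finite N'" using N'(1) fa finite_subset by blast
    have neN: "N' \<noteq> {}" using N'(2) spos by (auto)
    define r where "r = Max ((\<lambda>i. dist (loc i) c) ` N')"
    have "r \<in> (\<lambda>i. dist (loc i) c) ` N'"
      unfolding r_def using fN neN by (intro Max_in) auto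
    then obtain i' where i': "i' \<in> N'" "dist (loc i') c = r" by auto
    have rle: "dist (loc i) c \<le> r" if "i \<in> N'" for i
      unfolding r_def using fN that by (intro Max_ge) auto
    have "\<exists>i\<in>N'. \<exists>w\<in>W. dist (loc i) w \<le> 2 * r"
    proof (rule uprf_one[OF assms(6) N'(1,2)])
      fix i j assume "i \<in> N'" "j \<in> N'"
      then show "dist (loc i) (loc j) \<le> 2 * r"
        using rle[of i] rle[of j] dist_triangle[of "loc i" "loc j" c] by (simp add: dist_commute)
    qed
    then obtain i w where iw: "i \<in> N'" "w \<in> W" "dist (loc i) w \<le> 2 * r" by blast
    define a where "a = dist (loc i) c"
    have h1: "\<alpha> * a < 2 * r"
      using lt[OF iw(1)] infdist_le[OF iw(2), of "loc i"] iw(3) unfolding a_def \<alpha>_def by linarith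
    have "infdist (loc i') W \<le> dist (loc i') w" using infdist_le[OF iw(2)] .
    also have "\<dots> \<le> dist (loc i') c + dist c (loc i) + dist (loc i) w"
      using dist_triangle[of "loc i'" w "loc i"] dist_triangle[of "loc i'" "loc i" c] by linarith
    finally have h2: "\<alpha> * r < 3 * r + a"
      using lt[OF i'(1)] i'(2) iw(3) unfolding a_def \<alpha>_def by (simp add: dist_commute)
    have s17: "sqrt 17 * sqrt 17 = 17" by simp
    have asq: "\<alpha> * \<alpha> = 3 * \<alpha> + 2" unfolding \<alpha>_def using s17 by (simp add: field_simps)
    have apos: "\<alpha> > 0" unfolding \<alpha>_def by (simp add: add_pos_nonneg)
    have "\<alpha> * (\<alpha> * r) < \<alpha> * (3 * r + a)" using h2 apos by simp
    also have "\<dots> = 3 * \<alpha> * r + \<alpha> * a" by (simp add: algebra_simps)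
    also have "\<dots> < 3 * \<alpha> * r + 2 * r" using h1 by simp
    finally have "(\<alpha> * \<alpha>) * r < (3 * \<alpha> + 2) * r" by (simp add: algebra_simps)
    thus False using asq by simp
  qed
next
  note fa = finite_agents[of n]
  show "ind_fair n k loc 3 W"
    unfolding ind_fair_def
  proof
    fix i assume i: "i \<in> agents n"
    define S where "S = {r::real. real (card {j \<in> agents n. dist (loc i) (loc j) \<le> r}) \<ge> real n / real k}"
    define R where "R = Max ((\<lambda>j. dist (loc i) (loc j)) ` agents n)"
    have "R \<in> S"
    proof -
      have "{j \<in> agents n. dist (loc i) (loc j) \<le> R} = agents n"
        unfolding R_def using fa by (auto intro: Max_ge)
      moreover have "card (agents n) = n" by (simp add: agents_def)
      moreover have "real n / real k \<le> real n" using assms(2)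
        by (simp add: divide_le_eq mult_le_cancel_left1)
      ultimately show ?thesis unfolding S_def by simp
    qed
    hence neS: "S \<noteq> {}" by auto
    have key: "infdist (loc i) W / 3 \<le> r" if "r \<in> S" for r
    proof -
      let ?G = "{j \<in> agents n. dist (loc i) (loc j) \<le> r}"
      have "\<exists>j\<in>?G. \<exists>w\<in>W. dist (loc j) w \<le> 2 * r"
      proof (rule uprf_one[OF assms(6)])
        show "?G \<subseteq> agents n" by auto
        show "real n / real k \<le> real (card ?G)" using that unfolding S_def by simp
        fix j j' assume "j \<in> ?G" "j' \<in> ?G"
        then show "dist (loc j) (loc j') \<le> 2 * r"
          using dist_triangle[of "loc j" "loc j'" "loc i"] by (auto simp: dist_commute)
      qed
      then obtain j w where "j \<in> ?G" "w \<in> W" "dist (loc j) w \<le> 2 * r" by blast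
      moreover have "infdist (loc i) W \<le> dist (loc i) w" using infdist_le[OF \<open>w \<in> W\<close>] .
      moreover have "dist (loc i) w \<le> dist (loc i) (loc j) + dist (loc j) w" by (rule dist_triangle)
      ultimately show ?thesis by auto
    qed
    have "infdist (loc i) W / 3 \<le> Inf S" using neS key by (intro cInf_greatest) auto
    thus "infdist (loc i) W \<le> 3 * ind_radius n k loc i"
      unfolding ind_radius_def S_def by simp
  qed
next
  note fa = finite_agents[of n]
  note spos = spos_lemma[OF assms(1,2)]
  fix \<gamma> :: real assume g1: "\<gamma> > 1"
  show "transferable_core n k loc C \<gamma> (3 * \<gamma> / (\<gamma> - 1)) W"
    unfolding transferable_core_def
  proof
    assume "\<exists>N' c. N' \<subseteq> agents n \<and> c \<in> C - W \<and> \<gamma> * real n / real k \<le> real (card N') \<and>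
          3 * \<gamma> / (\<gamma> - 1) * (\<Sum>i\<in>N'. dist (loc i) c) < (\<Sum>i\<in>N'. infdist (loc i) W)"
    then obtain N' c where N': "N' \<subseteq> agents n" "\<gamma> * real n / real k \<le> real (card N')"
      and lt: "3 * \<gamma> / (\<gamma> - 1) * (\<Sum>i\<in>N'. dist (loc i) c) < (\<Sum>i\<in>N'. infdist (loc i) W)"
      by blast
    define s where "s = real n / real k"
    define d where "d i = dist (loc i) c" for i
    define e where "e i = infdist (loc i) W" for i
    define \<rho> where "\<rho> = infdist c W"
    define D where "D = (\<Sum>i\<in>N'. d i)"
    define E where "E = (\<Sum>i\<in>N'. e i)"
    define m where "m = real (card N')"
    have fN: "finite N'" using N'(1) fa finite_subset by blast
    have mg: "\<gamma> * s \<le> m" using N'(2) unfolding s_def m_def by simp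
    have s0: "s > 0" using spos unfolding s_def .
    have r0: "\<rho> \<ge> 0" unfolding \<rho>_def by (rule infdist_nonneg)
    have d0: "d i \<ge> 0" for i unfolding d_def by simp
    have eb: "e i \<le> d i + \<rho>" for i unfolding e_def d_def \<rho>_def
      using infdist_triangle[of "loc i" W c] by simp
    have eb2: "\<rho> \<le> e i + d i" for i unfolding e_def d_def \<rho>_def
      using infdist_triangle[of c W "loc i"] by (simp add: dist_commute)
    have cnt: "real (card {i\<in>N'. d i \<le> t \<and> 2*t < e i}) < s" for t
    proof (rule ccontr)
      let ?G = "{i\<in>N'. d i \<le> t \<and> 2*t < e i}"
      assume "\<not> real (card ?G) < s"
      hence "\<exists>i\<in>?G. \<exists>w\<in>W. dist (loc i) w \<le> 2 * t"
      proof (intro uprf_one[OF assms(6)])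
        show "?G \<subseteq> agents n" using N'(1) by auto
        show "\<not> real (card ?G) < s \<Longrightarrow> real n / real k \<le> real (card ?G)" unfolding s_def by simp
        fix i j assume "i \<in> ?G" "j \<in> ?G"
        then show "dist (loc i) (loc j) \<le> 2 * t"
          using dist_triangle[of "loc i" "loc j" c] unfolding d_def by (auto simp: dist_commute)
      qed
      then obtain i w where "i \<in> ?G" "w \<in> W" "dist (loc i) w \<le> 2 * t" by blast
      moreover have "e i \<le> dist (loc i) w" unfolding e_def using infdist_le[OF \<open>w \<in> W\<close>] .
      ultimately show False by auto
    qed
    have ex: "(\<Sum>i\<in>N'. e i - 3 * d i) \<le> s * \<rho>"
      by (rule excess_bound[OF fN]) (use d0 eb r0 in auto, use cnt in \<open>meson less_imp_le\<close>)
    hence EE: "E \<le> 3 * D + s * \<rho>"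
      unfolding E_def D_def by (simp add: sum_subtractf sum_distrib_left)
    define L where "L = {i\<in>N'. 3 * d i < \<rho>}"
    have "L \<subseteq> {i\<in>N'. d i \<le> \<rho>/3 \<and> 2*(\<rho>/3) < e i}"
      unfolding L_def
    proof
      fix x assume "x \<in> {i \<in> N'. 3 * d i < \<rho>}"
      then have "x \<in> N'" "3 * d x < \<rho>" by auto
      moreover have "d x \<le> \<rho> / 3" "2 * (\<rho> / 3) < e x" using eb2[of x] \<open>3 * d x < \<rho>\<close> by linarith+
      ultimately show "x \<in> {i \<in> N'. d i \<le> \<rho> / 3 \<and> 2 * (\<rho> / 3) < e i}" by simp
    qed
    hence "card L \<le> card {i\<in>N'. d i \<le> \<rho>/3 \<and> 2*(\<rho>/3) < e i}"
      using fN by (intro card_mono) auto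
    hence cL: "real (card L) \<le> s" using cnt[of "\<rho>/3"] by linarith
    have fL: "finite L" using fN unfolding L_def by auto
    have S1: "D \<ge> (\<Sum>i\<in>N' - L. d i)" unfolding D_def
      using fN d0 by (intro sum_mono2) auto
    have S2: "(\<Sum>i\<in>N' - L. d i) \<ge> (\<Sum>i\<in>N' - L. \<rho>/3)"
      by (intro sum_mono) (auto simp: L_def)
    have S3: "(\<Sum>i\<in>N' - L. \<rho>/3) = real (card (N' - L)) * (\<rho>/3)" by simp
    have LN: "L \<subseteq> N'" unfolding L_def by auto
    have "card (N' - L) = card N' - card L" by (rule card_Diff_subset[OF fL LN])
    moreover have "card L \<le> card N'" by (rule card_mono[OF fN LN])
    ultimately have S4: "real (card (N' - L)) = m - real (card L)"
      unfolding m_def by (simp add: of_nat_diff)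
    have "(m - s) * (\<rho>/3) \<le> (m - real (card L)) * (\<rho>/3)"
      using cL r0 by (intro mult_right_mono) auto
    moreover have S5: "(\<Sum>i\<in>N' - L. \<rho>/3) = (m - real (card L)) * (\<rho>/3)"
      using S3 S4 by simp
    ultimately have DD: "D \<ge> (m - s) * (\<rho>/3)" using S1 S2 by linarith
    have "(\<gamma> - 1) * s * \<rho> \<le> (m - s) * \<rho>"
      using mg r0 by (intro mult_right_mono) (auto simp: algebra_simps)
    hence A: "(\<gamma> - 1) * s * \<rho> \<le> 3 * D" using DD by linarith
    have "(\<gamma> - 1) * E \<le> (\<gamma> - 1) * (3 * D + s * \<rho>)" using EE g1 by simp
    also have "\<dots> \<le> 3 * \<gamma> * D" using A by (simp add: algebra_simps)
    finally have "(\<gamma> - 1) * E \<le> 3 * \<gamma> * D" .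
    hence "E \<le> 3 * \<gamma> / (\<gamma> - 1) * D" using g1 by (simp add: field_simps)
    thus False using lt unfolding E_def D_def e_def d_def by simp
  qed
qed

end
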